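(* Let $n\ge 1$ and let $\mathsf{Q}:\mathbb{R}\to SO(n)$ be a map whose entries are twice continuously differentiable real functions. Define $\mathsf{P}(\tau):=\mathsf{Q}(\tau)^{\mathsf T}\,\mathsf{Q}''(\tau)$. Then for every $\tau\in\mathbb{R}$, every negative eigenvalue of $\operatorname{sym}(\mathsf{P}(\tau))$ (if any exists) has even algebraic multiplicity.
   Context: $\mathsf{Q}''$ denotes the entrywise second derivative of $\mathsf{Q}$; for a square real matrix $\mathsf{A}$, $\operatorname{sym}(\mathsf{A}):=\tfrac12(\mathsf{A}+\mathsf{A}^{\mathsf T})$. *)

theory Defs
  imports "HOL-Analysis.Derivative" "Jordan_Normal_Form.Char_Poly"
begin

definition mat_second_deriv :: "nat \<Rightarrow> (real \<Rightarrow> real mat) \<Rightarrow> real \<Rightarrow> real mat" where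
  "mat_second_deriv n Q \<tau> = mat n n (\<lambda>(i,j). deriv (deriv (\<lambda>t. Q t $$ (i,j))) \<tau>)"

definition sym_mat :: "real mat \<Rightarrow> real mat" where
  "sym_mat A = (1/2) \<cdot>\<^sub>m (A + A\<^sup>T)"

definition alg_mult :: "real mat \<Rightarrow> real \<Rightarrow> nat" where
  "alg_mult A x = Polynomial.order x (char_poly A)"

definition C2_real :: "(real \<Rightarrow> real) \<Rightarrow> bool" where
  "C2_real f \<longleftrightarrow> (\<forall>t. f differentiable (at t)) \<and> (\<forall>t. deriv f differentiable (at t))
     \<and> continuous_on UNIV (deriv (deriv f))"

end

theory Submission
  imports Defs
begin

interpretation of_real_poly_hom: map_poly_inj_idom_divide_hom "of_real :: real \<Rightarrow> complex" ..

lemma even_order_complex: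
  fixes P Q :: "complex poly" and z :: complex
  assumes P0: "P \<noteq> 0" and eq: "P \<circ>\<^sub>p [:0,0,1:] = Q^2" and z0: "z \<noteq> 0"
  shows "even (order (z^2) P)"
proof -
  define C where "C = z^2"
  define k where "k = order C P"
  obtain r where r: "P = [:-C,1:]^k * r" and nd: "\<not> [:-C,1:] dvd r"
    using order_decomp[OF P0] unfolding k_def by blast
  have rC: "poly r C \<noteq> 0" using nd by (simp add: poly_eq_0_iff_dvd)
  have lin: "[:-C,1:] \<circ>\<^sub>p [:0,0,1:] = [:-z,1:] * [:z,1:]"
    by (simp add: C_def pcompose_pCons power2_eq_square)
  have comp: "P \<circ>\<^sub>p [:0,0,1:] = [:-z,1:]^k * ([:z,1:]^k * (r \<circ>\<^sub>p [:0,0,1:]))"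
  proof -
    have "P \<circ>\<^sub>p [:0,0,1:] = ([:-C,1:] \<circ>\<^sub>p [:0,0,1:])^k * (r \<circ>\<^sub>p [:0,0,1:])"
      unfolding r by (simp only: pcompose_mult pcompose_hom.hom_power)
    also have "\<dots> = [:-z,1:]^k * ([:z,1:]^k * (r \<circ>\<^sub>p [:0,0,1:]))"
      unfolding lin power_mult_distrib by (simp only: mult.assoc)
    finally show ?thesis .
  qed
  have pz: "poly ([:z,1:]^k * (r \<circ>\<^sub>p [:0,0,1:])) z \<noteq> 0"
    using rC z0 by (simp add: poly_pcompose C_def power2_eq_square)
  hence nz: "[:z,1:]^k * (r \<circ>\<^sub>p [:0,0,1:]) \<noteq> 0" by auto
  have "order z (P \<circ>\<^sub>p [:0,0,1:]) = k"
    unfolding comp using nz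
    by (subst order_mult) (auto simp: order_power_n_n order_0I[OF pz])
  moreover have Qn: "Q \<noteq> 0" using eq P0 
    by (metis pcompose_eq_0 power_zero_numeral degree_pCons_eq_if one_neq_zero zero_less_Suc pCons_eq_0_iff)
  have "order z (Q^2) = 2 * order z Q"
    using Qn by (simp add: power2_eq_square order_mult)
  ultimately have "k = 2 * order z Q" using eq by simp
  thus ?thesis unfolding k_def C_def by simp
qed

lemma even_order_real:
  fixes p q :: "real poly" and c :: real
  assumes p0: "p \<noteq> 0" and eq: "p \<circ>\<^sub>p [:0,0,1:] = q^2" and c: "c < 0"
  shows "even (order c p)"
proof -
  define z where "z = \<i> * complex_of_real (sqrt (-c))"
  have z2: "z^2 = complex_of_real c" using c
    by (simp add: z_def power_mult_distrib of_real_power[symmetric] del: of_real_power)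
  have z0: "z \<noteq> 0" using c by (simp add: z_def)
  have "map_poly complex_of_real p \<circ>\<^sub>p [:0,0,1:] = (map_poly complex_of_real q)^2"
    using arg_cong[OF eq, of "map_poly complex_of_real"]
    by (simp add: of_real_hom.map_poly_pcompose of_real_poly_hom.hom_power)
  from even_order_complex[OF _ this z0] p0 have "even (order (z^2) (map_poly complex_of_real p))"
    by simp
  thus ?thesis unfolding z2 of_real_poly_hom.order_hom .
qed



lemma char_poly_sq_skew:
  fixes A :: "real mat"
  assumes A: "A \<in> carrier_mat n n" and sk: "A\<^sup>T = - A"
  shows "char_poly (A * A) \<circ>\<^sub>p [:0,0,1:] = (char_poly A)^2"
proof (rule poly_eq_poly_eq_iff[THEN iffD1], rule ext)
  fix s :: real
  define M1 where "M1 = s \<cdot>\<^sub>m 1\<^sub>m n - A"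
  define M2 where "M2 = s \<cdot>\<^sub>m 1\<^sub>m n + A"
  have M1c: "M1 \<in> carrier_mat n n" and M2c: "M2 \<in> carrier_mat n n" using A by (auto simp: M1_def M2_def)
  have e1: "- char_matrix A s = M1" using A
    by (intro eq_matI) (auto simp: M1_def char_matrix_def)
  have sq: "A * A \<in> carrier_mat n n" using A by auto
  have e2: "- char_matrix (A * A) (s^2) = M1 * M2"
  proof -
    have I: "s \<cdot>\<^sub>m 1\<^sub>m n \<in> carrier_mat n n" by simp
    have "M1 * M2 = M1 * (s \<cdot>\<^sub>m 1\<^sub>m n) + M1 * A" unfolding M2_def
      by (rule mult_add_distrib_mat[OF M1c I A])
    also have "M1 * (s \<cdot>\<^sub>m 1\<^sub>m n) = s \<cdot>\<^sub>m M1" using M1c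
      by (metis mult_smult_distrib one_carrier_mat right_mult_one_mat)
    also have "M1 * A = (s \<cdot>\<^sub>m 1\<^sub>m n) * A - A * A" unfolding M1_def
      by (rule minus_mult_distrib_mat[OF I A A])
    also have "(s \<cdot>\<^sub>m 1\<^sub>m n) * A = s \<cdot>\<^sub>m A" using A
      by (metis left_mult_one_mat mult_smult_assoc_mat one_carrier_mat)
    finally have "M1 * M2 = s \<cdot>\<^sub>m M1 + (s \<cdot>\<^sub>m A - A * A)" .
    also have "\<dots> = (s * s) \<cdot>\<^sub>m 1\<^sub>m n - A * A" using A sq
      by (intro eq_matI) (auto simp: M1_def algebra_simps)
    finally have "M1 * M2 = (s * s) \<cdot>\<^sub>m 1\<^sub>m n - A * A" .
    then show ?thesis using A sq
      by (intro eq_matI) (auto simp: char_matrix_def power2_eq_square)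
  qed
  have skw: "A $$ (j,i) = - A $$ (i,j)" if "i < n" "j < n" for i j
  proof -
    have "A\<^sup>T $$ (i,j) = (- A) $$ (i,j)" using sk by simp
    thus ?thesis using A that by simp
  qed
  have tr: "M2 = M1\<^sup>T"
  proof (rule eq_matI)
    fix i j assume "i < dim_row (M1\<^sup>T)" "j < dim_col (M1\<^sup>T)"
    hence i: "i < n" and j: "j < n" using M1c by auto
    show "M2 $$ (i,j) = M1\<^sup>T $$ (i,j)" using skw[OF i j] A i j by (simp add: M1_def M2_def)
  qed (use M1c M2c in auto)
  have "poly (char_poly (A * A) \<circ>\<^sub>p [:0,0,1:]) s = poly (char_poly (A*A)) (s^2)"
    by (simp add: poly_pcompose power2_eq_square)
  also have "\<dots> = det (M1 * M2)" using char_poly_matrix[OF sq] e2 by simp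
  also have "\<dots> = det M1 * det M2" using det_mult M1c M2c by blast
  also have "\<dots> = (det M1)^2" using tr det_transpose[OF M1c] by (simp add: power2_eq_square)
  also have "\<dots> = poly ((char_poly A)^2) s" using char_poly_matrix[OF A] e1 by simp
  finally show "poly (char_poly (A * A) \<circ>\<^sub>p [:0,0,1:]) s = poly ((char_poly A)^2) s" .
qed



lemma mult_entry:
  fixes X Y :: "'a::comm_semiring_0 mat"
  assumes "X \<in> carrier_mat n n" "Y \<in> carrier_mat n n" "i < n" "j < n"
  shows "(X * Y) $$ (i,j) = (\<Sum>k<n. X $$ (i,k) * Y $$ (k,j))"
  using assms by (simp add: index_mult_mat scalar_prod_def atLeast0LessThan)

lemma C2_derivs:
  assumes "C2_real f"
  shows "(f has_real_derivative deriv f t) (at t)"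
    and "(deriv f has_real_derivative deriv (deriv f) t) (at t)"
  using assms unfolding C2_real_def by (auto simp: DERIV_deriv_iff_real_differentiable)

lemma deriv_zero_from_const:
  fixes g :: "real \<Rightarrow> real"
  assumes "\<And>t. g t = c" "\<And>t. (g has_real_derivative D t) (at t)"
  shows "D t = 0"
proof -
  have "g = (\<lambda>_. c)" using assms(1) by auto
  hence "((\<lambda>_. c) has_real_derivative D t) (at t)" using assms(2) by metis
  moreover have "((\<lambda>_. c) has_real_derivative 0) (at t)" by simp
  ultimately show ?thesis using DERIV_unique by blast
qed

lemma ortho_derivs:
  fixes Q :: "real \<Rightarrow> real mat"
  assumes SO: "\<And>\<tau>. Q \<tau> \<in> carrier_mat n n \<and> (Q \<tau>)\<^sup>T * Q \<tau> = 1\<^sub>m n"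
    and C2: "\<And>i j. i < n \<Longrightarrow> j < n \<Longrightarrow> C2_real (\<lambda>t. Q t $$ (i,j))"
    and ij: "i < n" "j < n"
  defines "f \<equiv> \<lambda>i j t. Q t $$ (i,j)"
  shows "(\<Sum>k<n. deriv (f k i) t * f k j t + f k i t * deriv (f k j) t) = 0"
    and "(\<Sum>k<n. deriv (deriv (f k i)) t * f k j t + 2 * (deriv (f k i) t * deriv (f k j) t)
           + f k i t * deriv (deriv (f k j)) t) = 0"
proof -
  have d1: "(f a b has_real_derivative deriv (f a b) t) (at t)"
    and d2: "(deriv (f a b) has_real_derivative deriv (deriv (f a b)) t) (at t)"
    if "a < n" "b < n" for a b t
    using C2_derivs[OF C2[OF that]] unfolding f_def by auto
  have orth: "(\<Sum>k<n. f k i t * f k j t) = (if i = j then 1 else 0)" for t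
  proof -
    have "((Q t)\<^sup>T * Q t) $$ (i,j) = (\<Sum>k<n. f k i t * f k j t)"
      using SO[of t] ij by (subst mult_entry[of _ n]) (auto simp: f_def)
    thus ?thesis using SO[of t] ij by simp
  qed
  have D1: "((\<lambda>t. \<Sum>k<n. f k i t * f k j t) has_real_derivative
       (\<Sum>k<n. deriv (f k i) t * f k j t + f k i t * deriv (f k j) t)) (at t)" for t
    by (rule DERIV_sum, rule DERIV_mult'[THEN DERIV_cong]) (auto intro!: d1 ij simp: algebra_simps)
  show e1: "(\<Sum>k<n. deriv (f k i) t * f k j t + f k i t * deriv (f k j) t) = 0" for t
    by (rule deriv_zero_from_const[OF orth D1])
  have D2: "((\<lambda>t. \<Sum>k<n. deriv (f k i) t * f k j t + f k i t * deriv (f k j) t) has_real_derivative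
       (\<Sum>k<n. deriv (deriv (f k i)) t * f k j t + 2 * (deriv (f k i) t * deriv (f k j) t)
           + f k i t * deriv (deriv (f k j)) t)) (at t)" for t
    apply (rule DERIV_sum)
    apply (rule DERIV_cong)
     apply (rule DERIV_add)
      apply (rule DERIV_mult')
       apply (rule d2; use ij in simp)
      apply (rule d1; use ij in simp)
     apply (rule DERIV_mult')
      apply (rule d1; use ij in simp)
     apply (rule d2; use ij in simp)
    apply (simp add: algebra_simps)
    done
  show "(\<Sum>k<n. deriv (deriv (f k i)) t * f k j t + 2 * (deriv (f k i) t * deriv (f k j) t)
           + f k i t * deriv (deriv (f k j)) t) = 0"
    by (rule deriv_zero_from_const[OF e1 D2])
qed


theorem lemma4:
  fixes n :: nat and Q :: "real \<Rightarrow> real mat"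
  assumes "n \<ge> 1"
    and SO: "\<And>\<tau>. Q \<tau> \<in> carrier_mat n n \<and> (Q \<tau>)\<^sup>T * Q \<tau> = 1\<^sub>m n \<and> det (Q \<tau>) = 1"
    and C2: "\<And>i j. i < n \<Longrightarrow> j < n \<Longrightarrow> C2_real (\<lambda>t. Q t $$ (i,j))"
  shows "\<forall>\<tau> lam. lam < 0 \<longrightarrow>
           eigenvalue (sym_mat ((Q \<tau>)\<^sup>T * mat_second_deriv n Q \<tau>)) lam \<longrightarrow>
           even (alg_mult (sym_mat ((Q \<tau>)\<^sup>T * mat_second_deriv n Q \<tau>)) lam)"
proof (intro allI impI)
  fix \<tau> lam :: real
  assume lam: "lam < 0"
  define f where "f = (\<lambda>i j t. Q t $$ (i,j))"
  define Qm where "Qm = Q \<tau>"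
  define D1 where "D1 = mat n n (\<lambda>(i,j). deriv (f i j) \<tau>)"
  define D2 where "D2 = mat_second_deriv n Q \<tau>"
  have SO': "\<And>\<tau>. Q \<tau> \<in> carrier_mat n n \<and> (Q \<tau>)\<^sup>T * Q \<tau> = 1\<^sub>m n" using SO by blast
  have od1: "(\<Sum>k<n. deriv (f k i) t * f k j t + f k i t * deriv (f k j) t) = 0"
    if "i < n" "j < n" for i j t
    unfolding f_def by (rule ortho_derivs(1)) (use SO' C2 that in auto)
  have od2: "(\<Sum>k<n. deriv (deriv (f k i)) t * f k j t + 2 * (deriv (f k i) t * deriv (f k j) t)
           + f k i t * deriv (deriv (f k j)) t) = 0"
    if "i < n" "j < n" for i j t
    unfolding f_def by (rule ortho_derivs(2)) (use SO' C2 that in auto)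
  have Qc: "Qm \<in> carrier_mat n n" using SO unfolding Qm_def by blast
  have QTc: "Qm\<^sup>T \<in> carrier_mat n n" using Qc by simp
  have D1c: "D1 \<in> carrier_mat n n" unfolding D1_def by simp
  have D2c: "D2 \<in> carrier_mat n n" unfolding D2_def mat_second_deriv_def by simp
  have QQT: "Qm * Qm\<^sup>T = 1\<^sub>m n"
    using mat_mult_left_right_inverse[OF QTc Qc] SO unfolding Qm_def by blast
  define A where "A = Qm\<^sup>T * D1"
  have Ac: "A \<in> carrier_mat n n" unfolding A_def using QTc D1c by simp
  have Aent: "A $$ (i,j) = (\<Sum>k<n. f k i \<tau> * deriv (f k j) \<tau>)" if "i < n" "j < n" for i j
    unfolding A_def using that QTc D1c
    by (subst mult_entry[of _ n]) (auto simp: Qm_def f_def D1_def)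
  have skw: "A $$ (j,i) = - A $$ (i,j)" if "i < n" "j < n" for i j
  proof -
    have "A $$ (j,i) + A $$ (i,j) = (\<Sum>k<n. deriv (f k i) \<tau> * f k j \<tau> + f k i \<tau> * deriv (f k j) \<tau>)"
      unfolding Aent[OF that] Aent[OF that(2,1)] sum.distrib by (simp add: mult.commute)
    hence "A $$ (j,i) + A $$ (i,j) = 0" using od1[OF that, of \<tau>] by simp
    thus ?thesis by simp
  qed
  have sk: "A\<^sup>T = - A"
  proof (rule eq_matI)
    fix i j assume "i < dim_row (- A)" "j < dim_col (- A)"
    hence i: "i < n" and j: "j < n" using Ac by auto
    show "A\<^sup>T $$ (i,j) = (- A) $$ (i,j)" using skw[OF i j] Ac i j by simp
  qed (use Ac in auto)
  have ATA: "A\<^sup>T * A = D1\<^sup>T * D1"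
  proof -
    have AT: "A\<^sup>T = D1\<^sup>T * Qm" unfolding A_def by (rule transpose_mult[OF QTc D1c, simplified])
    have T: "D1\<^sup>T \<in> carrier_mat n n" using D1c by simp
    have QD: "Qm\<^sup>T * D1 \<in> carrier_mat n n" using QTc D1c by simp
    have "A\<^sup>T * A = D1\<^sup>T * Qm * (Qm\<^sup>T * D1)" by (subst AT) (simp only: A_def)
    also have "\<dots> = D1\<^sup>T * (Qm * (Qm\<^sup>T * D1))"
      by (rule assoc_mult_mat[OF T Qc QD])
    also have "Qm * (Qm\<^sup>T * D1) = (Qm * Qm\<^sup>T) * D1"
      by (rule assoc_mult_mat[symmetric, OF Qc QTc D1c])
    also have "(Qm * Qm\<^sup>T) * D1 = D1" unfolding QQT by (rule left_mult_one_mat[OF D1c])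
    finally show ?thesis .
  qed
  have AA: "A * A = - (D1\<^sup>T * D1)"
  proof (rule eq_matI)
    fix i j assume ij: "i < dim_row (- (D1\<^sup>T * D1))" "j < dim_col (- (D1\<^sup>T * D1))"
    hence i: "i < n" and j: "j < n" using D1c by auto
    have "(A * A) $$ (i,j) = (\<Sum>k<n. A $$ (i,k) * A $$ (k,j))" using mult_entry[OF Ac Ac i j] .
    also have "\<dots> = (\<Sum>k<n. - (A\<^sup>T $$ (i,k) * A $$ (k,j)))"
    proof (rule sum.cong)
      fix k assume "k \<in> {..<n}"
      hence k: "k < n" by simp
      have "A\<^sup>T $$ (i,k) = A $$ (k,i)" using Ac i k by simp
      also have "\<dots> = - A $$ (i,k)" by (rule skw[OF i k])
      finally show "A $$ (i,k) * A $$ (k,j) = - (A\<^sup>T $$ (i,k) * A $$ (k,j))" by simp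
    qed simp
    also have "\<dots> = - (\<Sum>k<n. A\<^sup>T $$ (i,k) * A $$ (k,j))" by (simp add: sum_negf)
    also have "\<dots> = - (A\<^sup>T * A) $$ (i,j)" using mult_entry[of "A\<^sup>T" n A i j] Ac i j by simp
    finally show "(A * A) $$ (i,j) = (- (D1\<^sup>T * D1)) $$ (i,j)" unfolding ATA using i j D1c by simp
  qed (use Ac D1c in auto)
  have S: "sym_mat (Qm\<^sup>T * D2) = A * A"
  proof (rule eq_matI)
    fix i j assume ij: "i < dim_row (A * A)" "j < dim_col (A * A)"
    hence i: "i < n" and j: "j < n" using Ac by auto
    have e: "(Qm\<^sup>T * D2) $$ (i,j) = (\<Sum>k<n. f k i \<tau> * deriv (deriv (f k j)) \<tau>)" if "i < n" "j < n" for i j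
      using that QTc D2c
      by (subst mult_entry[of _ n]) (auto simp: Qm_def f_def D2_def mat_second_deriv_def)
    have e2: "(D1\<^sup>T * D1) $$ (i,j) = (\<Sum>k<n. deriv (f k i) \<tau> * deriv (f k j) \<tau>)"
      using i j D1c by (subst mult_entry[of _ n]) (auto simp: D1_def)
    have "sym_mat (Qm\<^sup>T * D2) $$ (i,j) = 1/2 * ((Qm\<^sup>T * D2) $$ (i,j) + (Qm\<^sup>T * D2) $$ (j,i))"
      using i j QTc D2c by (simp add: sym_mat_def)
    also have "\<dots> = - (D1\<^sup>T * D1) $$ (i,j)"
    proof -
      have h1: "(\<Sum>k<n. deriv (deriv (f k i)) \<tau> * f k j \<tau>) + 2 * (\<Sum>k<n. deriv (f k i) \<tau> * deriv (f k j) \<tau>)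
           + (\<Sum>k<n. f k i \<tau> * deriv (deriv (f k j)) \<tau>) = 0"
        using od2[OF i j, of \<tau>] by (simp only: sum.distrib sum_distrib_left)
      have h2: "(\<Sum>k<n. f k j \<tau> * deriv (deriv (f k i)) \<tau>) = (\<Sum>k<n. deriv (deriv (f k i)) \<tau> * f k j \<tau>)"
        by (simp add: mult.commute)
      have arith: "\<And>a b c a' :: real. a + 2 * b + c = 0 \<Longrightarrow> a' = a \<Longrightarrow> 1/2 * (c + a') = - b"
        by (simp add: field_simps)
      show ?thesis unfolding e[OF i j] e[OF j i] e2 by (rule arith[OF h1 h2])
    qed
    finally show "sym_mat (Qm\<^sup>T * D2) $$ (i,j) = (A * A) $$ (i,j)" unfolding AA using i j D1c by simp
  qed (use Ac QTc D2c in \<open>auto simp: sym_mat_def\<close>)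
  have cp: "char_poly (A * A) \<noteq> 0"
    using degree_monic_char_poly[of "A * A" n] Ac by auto
  have "even (order lam (char_poly (A * A)))"
    by (rule even_order_real[OF cp char_poly_sq_skew[OF Ac sk] lam])
  thus "even (alg_mult (sym_mat ((Q \<tau>)\<^sup>T * mat_second_deriv n Q \<tau>)) lam)"
    unfolding alg_mult_def S[unfolded Qm_def D2_def] .
qed

end
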